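(* There exist a Banach algebra $A$ which is not nil and a Banach $A$-bimodule $X$ such that $JMul_{2}(A,X)\subsetneq JMul_{3}(A,X)$.
   Context: A Banach algebra $A$ is nil if there is $n\in\mathbb{N}$ with $a^n=0$ for all $a\in A$. A bounded linear map $J:A\to X$ is an $n$-Jordan multiplier if $J(a^n)=a\cdot J(a^{n-1})=J(a^{n-1})\cdot a$ for all $a\in A$; $JMul_n(A,X)$ is the set of these. *)

theory Defs
  imports "HOL-Analysis.Analysis"
begin

text \<open>Complex Banach spaces are modelled concretely as the (complete, normed)
  spaces complex^'n; complex scalar multiplication is the componentwise
  product c *s v.\<close>

definition bounded_clinear_map :: "(complex^'n \<Rightarrow> complex^'m) \<Rightarrow> bool" where
  "bounded_clinear_map f \<longleftrightarrow>
     (\<forall>x y. f (x + y) = f x + f y) \<and> (\<forall>c x. f (c *s x) = c *s f x) \<and>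
     (\<exists>K. \<forall>x. norm (f x) \<le> K * norm x)"

definition bounded_cbilinear_map :: "('u::real_normed_vector \<Rightarrow> 'v::real_normed_vector \<Rightarrow> complex^'w) \<Rightarrow>
    ((complex \<Rightarrow> 'u \<Rightarrow> 'u)) \<Rightarrow> ((complex \<Rightarrow> 'v \<Rightarrow> 'v)) \<Rightarrow> bool" where
  "bounded_cbilinear_map f su sv \<longleftrightarrow>
     (\<forall>a b x. f (a + b) x = f a x + f b x) \<and> (\<forall>a x y. f a (x + y) = f a x + f a y) \<and>
     (\<forall>c a x. f (su c a) x = c *s f a x) \<and> (\<forall>c a x. f a (sv c x) = c *s f a x) \<and>
     (\<exists>K. \<forall>a x. norm (f a x) \<le> K * norm a * norm x)"

text \<open>A complex Banach algebra (not necessarily unital) on complex^'n: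
  an associative, complex-bilinear multiplication with submultiplicative norm.\<close>
definition cbanach_algebra :: "(complex^'n \<Rightarrow> complex^'n \<Rightarrow> complex^'n) \<Rightarrow> bool" where
  "cbanach_algebra mul \<longleftrightarrow>
     bounded_cbilinear_map mul (*s) (*s) \<and>
     (\<forall>a b c. mul (mul a b) c = mul a (mul b c)) \<and>
     (\<forall>a b. norm (mul a b) \<le> norm a * norm b)"

text \<open>Powers a^n for n \<ge> 1 in a possibly non-unital algebra (value at 0 is a dummy).\<close>
fun apow :: "('a \<Rightarrow> 'a \<Rightarrow> 'a) \<Rightarrow> 'a \<Rightarrow> nat \<Rightarrow> 'a::zero" where
  "apow mul a 0 = 0"
| "apow mul a (Suc 0) = a"
| "apow mul a (Suc (Suc n)) = mul a (apow mul a (Suc n))"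

definition is_nil :: "(complex^'n \<Rightarrow> complex^'n \<Rightarrow> complex^'n) \<Rightarrow> bool" where
  "is_nil mul \<longleftrightarrow> (\<exists>n\<ge>1. \<forall>a. apow mul a n = 0)"

text \<open>Banach A-bimodule X = complex^'m with left action lmul and right action rmul.\<close>
definition banach_bimodule ::
  "(complex^'n \<Rightarrow> complex^'n \<Rightarrow> complex^'n) \<Rightarrow> (complex^'n \<Rightarrow> complex^'m \<Rightarrow> complex^'m)
    \<Rightarrow> (complex^'m \<Rightarrow> complex^'n \<Rightarrow> complex^'m) \<Rightarrow> bool" where
  "banach_bimodule mul lmul rmul \<longleftrightarrow>
     bounded_cbilinear_map lmul (*s) (*s) \<and> bounded_cbilinear_map rmul (*s) (*s) \<and>
     (\<forall>a b x. lmul (mul a b) x = lmul a (lmul b x)) \<and>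
     (\<forall>a b x. rmul x (mul a b) = rmul (rmul x a) b) \<and>
     (\<forall>a b x. rmul (lmul a x) b = lmul a (rmul x b))"

text \<open>n-Jordan multipliers: J(a^n) = a\<cdot>J(a^(n-1)) = J(a^(n-1))\<cdot>a.\<close>
definition JMul ::
  "(complex^'n \<Rightarrow> complex^'n \<Rightarrow> complex^'n) \<Rightarrow> (complex^'n \<Rightarrow> complex^'m \<Rightarrow> complex^'m)
    \<Rightarrow> (complex^'m \<Rightarrow> complex^'n \<Rightarrow> complex^'m) \<Rightarrow> nat \<Rightarrow> (complex^'n \<Rightarrow> complex^'m) set" where
  "JMul mul lmul rmul n = {J. bounded_clinear_map J \<and>
     (\<forall>a. J (apow mul a n) = lmul a (J (apow mul a (n - 1))) \<and>
          J (apow mul a n) = rmul (J (apow mul a (n - 1))) a)}"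

end

theory Submission
  imports Defs
begin

definition mmul :: "complex^3 \<Rightarrow> complex^3 \<Rightarrow> complex^3" where
  "mmul a b = vector [a$1 * b$1, 0, a$2 * b$2]"

definition J0 :: "complex^3 \<Rightarrow> complex^3" where
  "J0 x = vector [x$3, 0, 0]"

lemma vec3_eq: "(x::complex^3) = y \<longleftrightarrow> x$1 = y$1 \<and> x$2 = y$2 \<and> x$3 = y$3"
  by (auto simp: vec_eq_iff forall_3)

lemma norm_sq3: "(norm (x::complex^3))^2 = (cmod (x$1))^2 + (cmod (x$2))^2 + (cmod (x$3))^2"
  unfolding norm_vec_def L2_set_def by (simp add: sum_3 sum_nonneg)

lemma mmul_norm: "norm (mmul a b) \<le> norm a * norm b"
proof -
  have "(norm (mmul a b))^2 = (cmod (a$1))^2 * (cmod (b$1))^2 + (cmod (a$2))^2 * (cmod (b$2))^2"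
    by (simp add: norm_sq3 mmul_def norm_mult power_mult_distrib)
  also have "\<dots> \<le> ((cmod (a$1))^2 + (cmod (a$2))^2 + (cmod (a$3))^2) *
       ((cmod (b$1))^2 + (cmod (b$2))^2 + (cmod (b$3))^2)"
    by (simp add: algebra_simps add_nonneg_nonneg mult_nonneg_nonneg)
  also have "\<dots> = (norm a * norm b)^2" by (simp add: norm_sq3 power_mult_distrib)
  finally show ?thesis
    by (meson norm_ge_zero mult_nonneg_nonneg power2_le_imp_le)
qed

lemma cba: "cbanach_algebra mmul"
  unfolding cbanach_algebra_def bounded_cbilinear_map_def
  apply (intro conjI)
  apply (simp_all only: mmul_norm)
  apply (simp_all add: vec3_eq mmul_def algebra_simps)
  apply (rule exI[of _ 1]) using mmul_norm apply (simp add: mmul_def)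
  done

lemma apow_e: "apow mmul (vector [1,0,0]) (Suc n) = vector [1,0,0]"
  by (induction n) (simp_all add: mmul_def vec3_eq)

lemma not_nil: "\<not> is_nil mmul"
  unfolding is_nil_def
proof
  assume "\<exists>n\<ge>1. \<forall>a. apow mmul a n = 0"
  then obtain n where n: "n \<ge> 1" "\<forall>a. apow mmul a n = 0" by blast
  then obtain m where "n = Suc m" by (cases n) auto
  with n apow_e[of m] have "(vector [1,0,0] :: complex^3) = 0" by simp
  then show False by (simp add: vec3_eq)
qed

lemma zero_bil: "bounded_cbilinear_map (\<lambda>a x. 0) (*s) (*s)"
  unfolding bounded_cbilinear_map_def by (auto intro: exI[of _ 0])

lemma bim: "banach_bimodule mmul (\<lambda>a x. 0) (\<lambda>x a. 0)"
  unfolding banach_bimodule_def by (simp add: zero_bil)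

lemma J0_bounded: "bounded_clinear_map J0"
  unfolding bounded_clinear_map_def
proof (intro conjI)
  show "\<forall>x y. J0 (x + y) = J0 x + J0 y" by (simp add: J0_def vec3_eq)
  show "\<forall>c x. J0 (c *s x) = c *s J0 x" by (simp add: J0_def vec3_eq)
  show "\<exists>K. \<forall>x. norm (J0 x) \<le> K * norm x"
  proof (intro exI allI)
    fix x :: "complex^3"
    have "(norm (J0 x))^2 = (cmod (x$3))^2" by (simp add: norm_sq3 J0_def)
    then have "norm (J0 x) = cmod (x$3)" using norm_ge_zero
      by (metis power2_eq_iff_nonneg)
    then show "norm (J0 x) \<le> 1 * norm x" using Finite_Cartesian_Product.norm_nth_le[of x 3] by simp
  qed
qed

lemma apow2: "apow mul a 2 = mul a a"
  by (simp add: numeral_2_eq_2)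
lemma apow3: "apow mul a 3 = mul a (mul a a)"
  by (simp add: numeral_3_eq_3)

theorem mainTheorem16:
  shows "\<exists>(mul :: complex^3 \<Rightarrow> complex^3 \<Rightarrow> complex^3)
            (lmul :: complex^3 \<Rightarrow> complex^3 \<Rightarrow> complex^3)
            (rmul :: complex^3 \<Rightarrow> complex^3 \<Rightarrow> complex^3).
           cbanach_algebra mul \<and> \<not> is_nil mul \<and> banach_bimodule mul lmul rmul \<and>
           JMul mul lmul rmul 2 \<subset> JMul mul lmul rmul 3"
proof (intro exI conjI)
  show "cbanach_algebra mmul" by (rule cba)
  show "\<not> is_nil mmul" by (rule not_nil)
  show "banach_bimodule mmul (\<lambda>a x. 0) (\<lambda>x a. 0)" by (rule bim)
  let ?L = "\<lambda>a x. 0 :: complex^3" and ?R = "\<lambda>x a. 0 :: complex^3"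
  have sub: "JMul mmul ?L ?R 2 \<subseteq> JMul mmul ?L ?R 3"
  proof
    fix J assume "J \<in> JMul mmul ?L ?R 2"
    then have bJ: "bounded_clinear_map J" and h: "\<And>a. J (mmul a a) = 0"
      unfolding JMul_def by (auto simp: apow2)
    have "J (mmul a (mmul a a)) = 0" for a
    proof -
      let ?b = "vector [csqrt ((a$1)^3), 0, 0] :: complex^3"
      have "mmul a (mmul a a) = mmul ?b ?b"
        by (simp add: mmul_def vec3_eq power3_eq_cube power2_eq_square[symmetric])
      with h show ?thesis by simp
    qed
    with bJ show "J \<in> JMul mmul ?L ?R 3" unfolding JMul_def by (simp add: apow3)
  qed
  have "J0 \<in> JMul mmul ?L ?R 3"
    unfolding JMul_def using J0_bounded
    by (simp add: apow3 J0_def mmul_def vec3_eq)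
  moreover have "J0 \<notin> JMul mmul ?L ?R 2"
  proof
    assume "J0 \<in> JMul mmul ?L ?R 2"
    then have "J0 (mmul (vector [0,1,0]) (vector [0,1,0])) = 0"
      unfolding JMul_def by (simp add: apow2)
    then show False by (simp add: J0_def mmul_def vec3_eq)
  qed
  ultimately show "JMul mmul ?L ?R 2 \<subset> JMul mmul ?L ?R 3" using sub by blast
qed

end
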